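(* (a) If $\tau\in\mathcal{T}$ and the space $(\mathbb{R},\tau)$ is connected, then every interval $I\subset\mathbb{R}$ is connected in $(\mathbb{R},\tau)$. (b) If $F:\mathbb{R}\to\mathbb{R}$ is a function whose graph is a connected subspace of $\mathbb{R}^2$, then $F\cap(I\times\mathbb{R})$ is connected for every interval $I\subset\mathbb{R}$.
   Context: $\eta$ denotes the Euclidean topology on $\mathbb{R}$; $\mathcal{T}$ is the family of all topologies on $\mathbb{R}$ finer than $\eta$. A real function is identified with its graph in $\mathbb{R}^2$ with the subspace topology. *)

theory Defs
  imports "HOL-Analysis.Analysis"
begin

definition fgraph :: "(real \<Rightarrow> real) \<Rightarrow> (real \<times> real) set" where
  "fgraph F = {(x, F x) | x. True}"

definition finer_than_euclidean :: "real topology \<Rightarrow> bool" where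
  "finer_than_euclidean \<tau> \<longleftrightarrow> topspace \<tau> = UNIV \<and> (\<forall>U. openin euclideanreal U \<longrightarrow> openin \<tau> U)"

end

theory Submission
  imports Defs
begin

lemma sep_aux:
  fixes X :: "'a topology" and c :: "'a \<Rightarrow> real"
  assumes conn: "connected_space X"
    and lt: "\<And>t. openin X {x\<in>topspace X. c x < t}"
    and gt: "\<And>t. openin X {x\<in>topspace X. c x > t}"
    and inj: "inj_on c (topspace X)"
    and I: "is_interval I"
    and S: "S = {x\<in>topspace X. c x \<in> I}"
    and E1: "openin X E1" and E2: "openin X E2"
    and cov: "S \<subseteq> E1 \<union> E2" and dis: "E1 \<inter> E2 \<inter> S = {}"
    and p: "p \<in> E1" "p \<in> S" and q: "q \<in> E2" "q \<in> S" and pq: "c p < c q"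
  shows False
proof -
  define A where "A = (E1 \<inter> {x\<in>topspace X. c x < c q}) \<union> {x\<in>topspace X. c x < c p}"
  define B where "B = (E2 \<inter> {x\<in>topspace X. c x > c p}) \<union> {x\<in>topspace X. c x > c q}"
  have oA: "openin X A" unfolding A_def using E1 lt by (intro openin_Un openin_Int) auto
  have oB: "openin X B" unfolding B_def using E2 gt by (intro openin_Un openin_Int) auto
  have Iint: "\<And>x. x \<in> topspace X \<Longrightarrow> c p \<le> c x \<Longrightarrow> c x \<le> c q \<Longrightarrow> x \<in> S"
    using I p q S unfolding is_interval_1 by auto
  have pt: "p \<in> topspace X" "q \<in> topspace X" using p q S by auto
  have cov2: "topspace X \<subseteq> A \<union> B"
  proof
    fix x assume x: "x \<in> topspace X"
    show "x \<in> A \<union> B"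
    proof (cases "c x < c p")
      case True then show ?thesis using x A_def by auto
    next
      case nlt: False
      show ?thesis
      proof (cases "c x > c q")
        case True then show ?thesis using x B_def by auto
      next
        case False
        then have xS: "x \<in> S" using Iint x nlt by auto
        show ?thesis
        proof (cases "x \<in> E1")
          case True
          show ?thesis
          proof (cases "c x = c q")
            case True
            then have "x = q" using inj x pt by (auto dest: inj_onD)
            then show ?thesis using B_def q pq pt by auto
          next
            case False
            then show ?thesis using \<open>x \<in> E1\<close> x \<open>\<not> c x > c q\<close> A_def by auto
          qed
        next
          case False
          then have "x \<in> E2" using xS cov by auto
          show ?thesis
          proof (cases "c x = c p")
            case True
            then have "x = p" using inj x pt by (auto dest: inj_onD)
            then show ?thesis using A_def p pq pt by auto
          next
            case False
            then show ?thesis using \<open>x \<in> E2\<close> x nlt B_def by auto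
          qed
        qed
      qed
    qed
  qed
  have disj: "A \<inter> B = {}"
  proof (rule ccontr)
    assume "A \<inter> B \<noteq> {}"
    then obtain x where xA: "x \<in> A" and xB: "x \<in> B" by auto
    have "x \<in> topspace X" using xA A_def by auto
    show False
    proof (cases "c x < c p")
      case True then show ?thesis using xB B_def pq by auto
    next
      case False
      then have "x \<in> E1" "c x < c q" using xA A_def by auto
      then have "x \<in> E2" "c p < c x" using xB B_def by auto
      then have "x \<in> S" using Iint \<open>x \<in> topspace X\<close> \<open>c x < c q\<close> by auto
      then show False using dis \<open>x \<in> E1\<close> \<open>x \<in> E2\<close> by auto
    qed
  qed
  have "A \<noteq> {}" using A_def p pq pt by auto
  moreover have "B \<noteq> {}" using B_def q pq pt by auto
  ultimately show False using connected_spaceD[OF conn oA oB cov2 disj] by blast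
qed

lemma key:
  fixes X :: "'a topology" and c :: "'a \<Rightarrow> real"
  assumes conn: "connected_space X"
    and lt: "\<And>t. openin X {x\<in>topspace X. c x < t}"
    and gt: "\<And>t. openin X {x\<in>topspace X. c x > t}"
    and inj: "inj_on c (topspace X)"
    and I: "is_interval I"
  shows "connectedin X {x\<in>topspace X. c x \<in> I}"
  unfolding connectedin
proof (intro conjI notI)
  show "{x \<in> topspace X. c x \<in> I} \<subseteq> topspace X" by auto
next
  assume "\<exists>E1 E2. openin X E1 \<and> openin X E2 \<and> {x \<in> topspace X. c x \<in> I} \<subseteq> E1 \<union> E2 \<and>
      E1 \<inter> E2 \<inter> {x \<in> topspace X. c x \<in> I} = {} \<and>
      E1 \<inter> {x \<in> topspace X. c x \<in> I} \<noteq> {} \<and> E2 \<inter> {x \<in> topspace X. c x \<in> I} \<noteq> {}"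
  then obtain E1 E2 where h: "openin X E1" "openin X E2" "{x \<in> topspace X. c x \<in> I} \<subseteq> E1 \<union> E2"
      "E1 \<inter> E2 \<inter> {x \<in> topspace X. c x \<in> I} = {}"
      "E1 \<inter> {x \<in> topspace X. c x \<in> I} \<noteq> {}" "E2 \<inter> {x \<in> topspace X. c x \<in> I} \<noteq> {}" by blast
  obtain p where p: "p \<in> E1" "p \<in> {x \<in> topspace X. c x \<in> I}" using h(5) by blast
  obtain q where q: "q \<in> E2" "q \<in> {x \<in> topspace X. c x \<in> I}" using h(6) by blast
  have "p \<noteq> q" using p q h(4) by auto
  then have "c p \<noteq> c q" using inj p q by (auto dest: inj_onD)
  then consider "c p < c q" | "c q < c p" by linarith
  then show False
  proof cases
    case 1
    show False by (rule sep_aux[OF conn lt gt inj I refl h(1) h(2) h(3) h(4) p q 1])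
  next
    case 2
    have "E2 \<inter> E1 \<inter> {x \<in> topspace X. c x \<in> I} = {}" using h(4) by auto
    moreover have "{x \<in> topspace X. c x \<in> I} \<subseteq> E2 \<union> E1" using h(3) by auto
    ultimately show False using sep_aux[OF conn lt gt inj I refl h(2) h(1) _ _ q p 2] by blast
  qed
qed

theorem lemma5:
  shows "(\<forall>\<tau>. finer_than_euclidean \<tau> \<and> connected_space \<tau> \<longrightarrow>
            (\<forall>I::real set. is_interval I \<longrightarrow> connectedin \<tau> I))
       \<and> (\<forall>F::real \<Rightarrow> real. connected (fgraph F) \<longrightarrow>
            (\<forall>I::real set. is_interval I \<longrightarrow> connected (fgraph F \<inter> (I \<times> UNIV))))"
proof (intro conjI allI impI)
  fix \<tau> :: "real topology" and I :: "real set"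
  assume h: "finer_than_euclidean \<tau> \<and> connected_space \<tau>" and I: "is_interval I"
  have top: "topspace \<tau> = UNIV" and fin: "\<And>U. open U \<Longrightarrow> openin \<tau> U"
    using h unfolding finer_than_euclidean_def by auto
  have "connectedin \<tau> {x\<in>topspace \<tau>. id x \<in> I}"
  proof (rule key)
    show "connected_space \<tau>" using h by auto
    show "openin \<tau> {x \<in> topspace \<tau>. id x < t}" for t
      using fin[of "{..<t}"] top open_lessThan[of t] by (simp add: lessThan_def)
    show "openin \<tau> {x \<in> topspace \<tau>. id x > t}" for t
      using fin[of "{t<..}"] top open_greaterThan[of t] by (simp add: greaterThan_def)
  qed (use I in auto)
  then show "connectedin \<tau> I" using top by simp
next
  fix F :: "real \<Rightarrow> real" and I :: "real set"
  assume c: "connected (fgraph F)" and I: "is_interval I"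
  let ?X = "subtopology euclidean (fgraph F)"
  have "connectedin ?X {x\<in>topspace ?X. fst x \<in> I}"
  proof (rule key)
    show "connected_space ?X" using c
      by (metis connectedin_iff_connected connectedin_def)
    show "openin ?X {x \<in> topspace ?X. fst x < t}" for t
    proof -
      have "open {x::real\<times>real. fst x < t}"
        by (intro open_Collect_less continuous_intros)
      then show ?thesis by (auto simp: openin_subtopology_alt image_def intro!: exI[of _ "{x::real\<times>real. fst x < t}"])
    qed
    show "openin ?X {x \<in> topspace ?X. fst x > t}" for t
    proof -
      have "open {x::real\<times>real. fst x > t}"
        by (intro open_Collect_less continuous_intros)
      then show ?thesis by (auto simp: openin_subtopology_alt image_def intro!: exI[of _ "{x::real\<times>real. fst x > t}"])
    qed
    show "inj_on fst (topspace ?X)" by (auto simp: fgraph_def inj_on_def)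
  qed (use I in auto)
  moreover have "{x\<in>topspace ?X. fst x \<in> I} = fgraph F \<inter> (I \<times> UNIV)"
    by auto
  ultimately show "connected (fgraph F \<inter> (I \<times> UNIV))"
    by (simp add: connectedin_subtopology)
qed

end
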